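(* Fix $n\ge-1$. For every $m\ge1$ and every $m$-generator $x=\langle i_0,\dots,i_m\rangle$ of $\mathcal O_n$ (with $0\le i_0<\cdots<i_m\le n$), writing $x\delta^j_m=\langle i_0,\dots,\widehat{i_j},\dots,i_m\rangle$ for the $(m-1)$-generator obtained by deleting $i_j$, we have in $\lambda(\mathcal O_n)_{m-1}$: $$[s(x)]=\sum_{\substack{0\le j\le m\\ j\text{ odd}}}[x\delta^j_m],\qquad [t(x)]=\sum_{\substack{0\le j\le m\\ j\text{ even}}}[x\delta^j_m].$$
   Context: All $\omega$-categories are strict and globular; for an $m$-cell $x$, $s(x),t(x)$ are its source and target, $s_i,t_i$ iterated ones. An expansion on an $\omega$-category $C$ consists of a $0$-cell $o$ and, for each $k$-cell $x$, a $(k+1)$-cell $\xi_x$ with $\xi_x:o\to x$ if $k=0$ and $\xi_x:\xi_{t(x)}\to x\star_0\xi_{s_0(x)}\star_1\cdots\star_{k-1}\xi_{s_{k-1}(x)}$ if $k>0$ ($\star_p$ the $p$-composition, lower-dimensional cells standing for iterated identities, composites bracketed giving priority to the lowest-dimensional composition), satisfying $\xi_{y\star_p x}=t_{p+1}(y)\star_0\xi_{s_0(x)}\star_1\cdots\star_{p-1}\xi_{s_{p-1}(x)}\star_p\xi_x\star_{p+1}\xi_y$, $\xi_{1_u}=1_{\xi_u}$, $\xi_{\xi_u}=1_{\xi_u}$, $\xi_o=1_o$. $T=UF$ is the monad on $\omega\mathbf{Cat}$ induced by the forgetful functor $U$ from $\omega$-categories with expansion (morphisms preserving $o$ and $\xi$)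 and its left adjoint $F$, with unit $\eta$. $\mathcal O_k=T^{k+1}(\emptyset)$ for $k\ge-1$ ($\mathcal O_{-1}=\emptyset$); $o_k$ and $\xi$ are the origin and expansion of $\mathcal O_k$ ($k\ge0$); $\eta^i:\mathcal O_k\to\mathcal O_{k+i}$ is the composite of units. For $0\le i_0\le\cdots\le i_m\le n$ the cell $\langle i_0,\dots,i_m\rangle$ of $\mathcal O_n$ is defined inductively by $\langle i\rangle=\eta^i(o_{n-i})$ and $\langle i_0,\dots,i_m\rangle=\eta^{i_0}(\xi_{\langle i_1-i_0,\dots,i_m-i_0\rangle})$ (inner cell in $\mathcal O_{n-i_0}$, $\xi$ the expansion of $\mathcal O_{n-i_0}$); the cells with $i_0<\cdots<i_m$ are exactly the $m$-generators of the polygraph freely generating $\mathcal O_n$, so they correspond to injective order-preserving maps $[m]\to[n]$, and $x\delta^j_m$ corresponds to precomposition with the coface $\delta^j_m:[m-1]\to[m]$ missing $j$. For an $\omega$-category $C$, $\lambda(C)_k$ is the free abelian group on $k$-cells of $C$ modulo the subgroup generated by $x\star_j y-x-y$ ($0\le j<k$, composite defined); $[x]$ denotes the class of $x$ (identity cells have class $0$). *)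

theory Defs
  imports Main "HOL-Library.Poly_Mapping"
begin

text \<open>
  Cells of O_k = T^(k+1)(empty) are represented by raw terms modulo an inductively
  generated equivalence.  A term at level k is built from
    Ori            the origin o_k of O_k,
    Xi t           the expansion cell xi_t of the cell t,
    Idc t          the identity 1_t,
    Comp p a b     the p-composite a *_p b  (a after b, i.e. s_p a = t_p b),
    Eta t          the image under the unit eta : O_(k-1) -> O_k of a cell t of O_(k-1).
  Level 0 (O_0 = T(empty)) has no Eta terms since O_(-1) is empty.
\<close>

datatype rt = Ori | Xi rt | Idc rt | Comp nat rt rt | Eta rt

fun dim :: "rt \<Rightarrow> nat" where
  "dim Ori = 0"
| "dim (Xi t) = Suc (dim t)"
| "dim (Idc t) = Suc (dim t)"
| "dim (Comp p a b) = dim a"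
| "dim (Eta t) = dim t"

text \<open>Padding a cell with iterated identities up to dimension d
  (lower-dimensional cells stand for iterated identities).\<close>
definition pad :: "nat \<Rightarrow> rt \<Rightarrow> rt" where
  "pad d t = (Idc ^^ (d - dim t)) t"

definition cmp :: "nat \<Rightarrow> rt \<Rightarrow> rt \<Rightarrow> rt" where
  "cmp p a b = Comp p (pad (max (dim a) (dim b)) a) (pad (max (dim a) (dim b)) b)"

text \<open>Left-nested composite  acc *_(j0) f j0 *_(j0+1) ... (priority to the lowest
  composition), over the list of indices js.\<close>
definition chain :: "(nat \<Rightarrow> rt) \<Rightarrow> rt \<Rightarrow> nat list \<Rightarrow> rt" where
  "chain f acc js = foldl (\<lambda>a j. cmp j a (f j)) acc js"

text \<open>Iterated boundaries: bd i False x = s_i(x), bd i True x = t_i(x)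
  (and x itself if i >= dim x).  For the expansion:
  s_0(xi_x) = o, s_i(xi_x) = xi_(t_(i-1) x) for i >= 1, and
  t_i(xi_x) = t_i(x) *_0 xi_(s_0 x) *_1 ... *_(i-1) xi_(s_(i-1) x).\<close>
fun bd :: "nat \<Rightarrow> bool \<Rightarrow> rt \<Rightarrow> rt" where
  "bd i e Ori = Ori"
| "bd i e (Idc t) = (if dim t < i then Idc t else bd i e t)"
| "bd i e (Eta t) = Eta (bd i e t)"
| "bd i e (Comp p a b) =
     (if dim a \<le> i then Comp p a b
      else if i \<le> p then (if e then bd i e a else bd i e b)
      else Comp p (bd i e a) (bd i e b))"
| "bd i e (Xi x) =
     (if dim x < i then Xi x
      else if e then chain (\<lambda>j. Xi (bd j False x)) (bd i True x) [0..<i]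
      else if i = 0 then Ori else Xi (bd (i - 1) True x))"

definition src :: "rt \<Rightarrow> rt" where "src x = bd (dim x - 1) False x"
definition tgt :: "rt \<Rightarrow> rt" where "tgt x = bd (dim x - 1) True x"

text \<open>Right-hand side of the expansion axiom for composites:
  xi_(y *_p x) = t_(p+1)(y) *_0 xi_(s_0 x) *_1 ... *_(p-1) xi_(s_(p-1) x) *_p xi_x *_(p+1) xi_y.\<close>
definition xiComp :: "nat \<Rightarrow> rt \<Rightarrow> rt \<Rightarrow> rt" where
  "xiComp p y x =
     cmp (Suc p) (cmp p (chain (\<lambda>j. Xi (bd j False x)) (bd (Suc p) True y) [0..<p]) (Xi x)) (Xi y)"

text \<open>Well-formed cells of O_k (wf k t) and equality of cells of O_k (eqv k t u):
  the free omega-category with expansion generated by the omega-category O_(k-1)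
  (the unit Eta being an omega-functor), O_(-1) being empty.\<close>
inductive wf :: "nat \<Rightarrow> rt \<Rightarrow> bool" and eqv :: "nat \<Rightarrow> rt \<Rightarrow> rt \<Rightarrow> bool" where
  wf_Ori: "wf k Ori"
| wf_Xi: "wf k t \<Longrightarrow> wf k (Xi t)"
| wf_Idc: "wf k t \<Longrightarrow> wf k (Idc t)"
| wf_Eta: "wf k t \<Longrightarrow> wf (Suc k) (Eta t)"
| wf_Comp: "\<lbrakk>wf k a; wf k b; dim a = dim b; p < dim a; eqv k (bd p False a) (bd p True b)\<rbrakk>
            \<Longrightarrow> wf k (Comp p a b)"
| wf_bd: "wf k t \<Longrightarrow> wf k (bd i e t)"
| wf_eqvL: "eqv k t u \<Longrightarrow> wf k t"
| wf_eqvR: "eqv k t u \<Longrightarrow> wf k u"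
| eqv_refl: "wf k t \<Longrightarrow> eqv k t t"
| eqv_sym: "eqv k t u \<Longrightarrow> eqv k u t"
| eqv_trans: "\<lbrakk>eqv k t u; eqv k u v\<rbrakk> \<Longrightarrow> eqv k t v"
| eqv_Xi: "eqv k t u \<Longrightarrow> eqv k (Xi t) (Xi u)"
| eqv_Idc: "eqv k t u \<Longrightarrow> eqv k (Idc t) (Idc u)"
| eqv_Eta: "eqv k t u \<Longrightarrow> eqv (Suc k) (Eta t) (Eta u)"
| eqv_Comp: "\<lbrakk>eqv k a a'; eqv k b b'; wf k (Comp p a b)\<rbrakk> \<Longrightarrow> eqv k (Comp p a b) (Comp p a' b')"
| eqv_bd: "eqv k t u \<Longrightarrow> eqv k (bd i e t) (bd i e u)"
| eqv_assoc: "wf k (Comp p (Comp p c b) a) \<Longrightarrow> eqv k (Comp p (Comp p c b) a) (Comp p c (Comp p b a))"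
| eqv_unitL: "\<lbrakk>wf k a; p < dim a\<rbrakk> \<Longrightarrow> eqv k (Comp p (pad (dim a) (bd p True a)) a) a"
| eqv_unitR: "\<lbrakk>wf k a; p < dim a\<rbrakk> \<Longrightarrow> eqv k (Comp p a (pad (dim a) (bd p False a))) a"
| eqv_interchange: "\<lbrakk>p < q; wf k (Comp p (Comp q d c) (Comp q b a))\<rbrakk>
      \<Longrightarrow> eqv k (Comp p (Comp q d c) (Comp q b a)) (Comp q (Comp p d b) (Comp p c a))"
| eqv_id_comp: "wf k (Comp p a b) \<Longrightarrow> eqv k (Idc (Comp p a b)) (Comp p (Idc a) (Idc b))"
| eqv_Eta_Comp: "wf k (Comp p a b) \<Longrightarrow> eqv (Suc k) (Eta (Comp p a b)) (Comp p (Eta a) (Eta b))"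
| eqv_Eta_Idc: "wf k a \<Longrightarrow> eqv (Suc k) (Eta (Idc a)) (Idc (Eta a))"
| eqv_Xi_Comp: "wf k (Comp p y x) \<Longrightarrow> eqv k (Xi (Comp p y x)) (xiComp p y x)"
| eqv_Xi_Idc: "wf k u \<Longrightarrow> eqv k (Xi (Idc u)) (Idc (Xi u))"
| eqv_Xi_Xi: "wf k u \<Longrightarrow> eqv k (Xi (Xi u)) (Idc (Xi u))"
| eqv_Xi_Ori: "eqv k (Xi Ori) (Idc Ori)"

text \<open>brk [i_0,...,i_m] is the cell \<langle>i_0,...,i_m\<rangle> of O_n (for any n >= i_m):
  \<langle>i\<rangle> = eta^i(o), \<langle>i_0,...,i_m\<rangle> = eta^(i_0)(xi_(\<langle>i_1-i_0,...,i_m-i_0\<rangle>)).\<close>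
fun brk :: "nat list \<Rightarrow> rt" where
  "brk [] = Ori"
| "brk [i] = (Eta ^^ i) Ori"
| "brk (i # j # r) = (Eta ^^ i) (Xi (brk (map (\<lambda>a. a - i) (j # r))))"

definition face :: "nat \<Rightarrow> nat list \<Rightarrow> nat list" where
  "face j xs = take j xs @ drop (Suc j) xs"

text \<open>Formal integer combinations of raw terms; lam_rel k d is the subgroup generated by
  [t]-[u] for equal d-cells t,u of O_k (so that formal sums of d-cells modulo it form the
  free abelian group on the d-cells) and x *_j y - x - y for composable d-cells, j < d.\<close>
inductive_set lam_rel :: "nat \<Rightarrow> nat \<Rightarrow> (rt \<Rightarrow>\<^sub>0 int) set" for k d where
  lr_eqv: "\<lbrakk>eqv k t u; dim t = d\<rbrakk> \<Longrightarrow> Poly_Mapping.single t 1 - Poly_Mapping.single u 1 \<in> lam_rel k d"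
| lr_comp: "\<lbrakk>wf k (Comp j a b); dim a = d; j < d\<rbrakk> \<Longrightarrow>
     Poly_Mapping.single (Comp j a b) 1 - Poly_Mapping.single a 1 - Poly_Mapping.single b 1 \<in> lam_rel k d"
| lr_zero: "0 \<in> lam_rel k d"
| lr_add: "\<lbrakk>f \<in> lam_rel k d; g \<in> lam_rel k d\<rbrakk> \<Longrightarrow> f + g \<in> lam_rel k d"
| lr_neg: "f \<in> lam_rel k d \<Longrightarrow> - f \<in> lam_rel k d"

definition lam_eq :: "nat \<Rightarrow> nat \<Rightarrow> (rt \<Rightarrow>\<^sub>0 int) \<Rightarrow> (rt \<Rightarrow>\<^sub>0 int) \<Rightarrow> bool" where
  "lam_eq k d f g \<longleftrightarrow> f - g \<in> lam_rel k d"

definition cls :: "rt \<Rightarrow> (rt \<Rightarrow>\<^sub>0 int)" where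
  "cls t = Poly_Mapping.single t 1"

end

theory Submission
  imports Defs
begin

lemma dim_Idcp[simp]: "dim ((Idc ^^ r) t) = dim t + r"
  by (induction r) auto

lemma dim_pad[simp]: "dim (pad d t) = max d (dim t)"
  unfolding pad_def by simp

lemma pad_id: "d \<le> dim t \<Longrightarrow> pad d t = t"
  unfolding pad_def by simp

lemma bd_id: "dim t \<le> i \<Longrightarrow> bd i e t = t"
  by (induction t) auto

lemma chain_Nil[simp]: "chain f a [] = a"
  unfolding chain_def by simp

lemma chain_snoc[simp]: "chain f a (js @ [j]) = cmp j (chain f a js) (f j)"
  unfolding chain_def by simp

lemma dim_cmp[simp]: "dim (cmp p a b) = max (dim a) (dim b)"
  unfolding cmp_def by simp

lemma dim_chain: "(\<forall>p\<in>set js. dim (f p) \<le> dim a) \<Longrightarrow> dim (chain f a js) = dim a"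
  by (induction js rule: rev_induct) auto

fun wd :: "rt \<Rightarrow> bool" where
  "wd Ori = True"
| "wd (Xi t) = wd t"
| "wd (Idc t) = wd t"
| "wd (Eta t) = wd t"
| "wd (Comp p a b) = (wd a \<and> wd b \<and> dim a = dim b \<and> p < dim a)"

lemma wd_Idcp[simp]: "wd ((Idc ^^ r) t) = wd t"
  by (induction r) auto

lemma wd_pad[simp]: "wd (pad d t) = wd t"
  unfolding pad_def by simp

lemma wd_cmp[simp]: "wd (cmp p a b) = (wd a \<and> wd b \<and> p < max (dim a) (dim b))"
  unfolding cmp_def by simp

lemma wd_chain: "wd a \<Longrightarrow> (\<forall>p\<in>set js. wd (f p) \<and> p < dim (f p)) \<Longrightarrow> wd (chain f a js)"
  by (induction js rule: rev_induct) auto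

lemma dim_bd_wd: "wd t \<Longrightarrow> dim (bd i e t) = min i (dim t) \<and> wd (bd i e t)"
proof (induction t arbitrary: i e)
  case (Xi x)
  show ?case
  proof (cases "dim x < i")
    case False
    have "dim (chain (\<lambda>j. Xi (bd j False x)) (bd i True x) [0..<i]) = dim (bd i True x)"
      using False Xi by (intro dim_chain) auto
    moreover have "wd (chain (\<lambda>j. Xi (bd j False x)) (bd i True x) [0..<i])"
      using Xi False by (intro wd_chain) auto
    ultimately show ?thesis using False Xi by auto
  qed (use Xi in auto)
qed auto

lemma dim_bd: "wd t \<Longrightarrow> dim (bd i e t) = min i (dim t)"
  using dim_bd_wd by blast

lemma wd_bd: "wd t \<Longrightarrow> wd (bd i e t)"
  using dim_bd_wd by blast

lemma bd_Idcp: "dim t \<le> j \<Longrightarrow> bd j e ((Idc ^^ r) t) = (Idc ^^ (min r (j - dim t))) t"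
proof (induction r)
  case 0 then show ?case by (simp add: bd_id)
next
  case (Suc r)
  show ?case
  proof (cases "dim t + r < j")
    case True
    then have "Suc r \<le> j - dim t" by arith
    then show ?thesis using Suc True by (simp add: min_def)
  next
    case False
    then have "j - dim t \<le> r" by arith
    then show ?thesis using Suc False by (simp add: min_def)
  qed
qed

lemma bd_pad_lo: "dim t \<le> j \<Longrightarrow> j \<le> M \<Longrightarrow> bd j e (pad M t) = pad j t"
  unfolding pad_def by (simp add: bd_Idcp)

lemma bd_Idcp_hi: "j \<le> dim t \<Longrightarrow> bd j e ((Idc ^^ r) t) = bd j e t"
  by (induction r) auto

lemma bd_pad_hi: "j \<le> dim t \<Longrightarrow> bd j e (pad M t) = bd j e t"
  unfolding pad_def by (simp add: bd_Idcp_hi)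

lemma chain_bd:
  assumes "wd a" "\<forall>p\<in>set js. p < j \<and> dim (f p) \<le> j" "j \<le> dim a"
  shows "bd j e (chain f a js) = chain f (bd j e a) js"
proof (cases "dim a = j")
  case True
  have "dim (chain f a js) = dim a" using assms by (intro dim_chain) auto
  then show ?thesis using True by (simp add: bd_id)
next
  case False
  then have ja: "j < dim a" using assms by simp
  show ?thesis using assms(2)
  proof (induction js rule: rev_induct)
    case Nil then show ?case by simp
  next
    case (snoc p js)
    have dC: "dim (chain f a js) = dim a" using snoc.prems ja by (intro dim_chain) auto
    have dC': "dim (chain f (bd j e a) js) = j" 
      using snoc.prems ja assms(1) by (subst dim_chain) (auto simp: dim_bd)
    have fp: "p < j" "dim (f p) \<le> j" using snoc.prems by auto
    have "bd j e (chain f a (js @ [p])) = Comp p (bd j e (chain f a js)) (bd j e (pad (dim a) (f p)))"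
      using dC fp ja by (simp add: cmp_def pad_id max_def)
    also have "\<dots> = Comp p (chain f (bd j e a) js) (pad j (f p))"
      using snoc fp ja by (simp add: bd_pad_lo)
    also have "\<dots> = chain f (bd j e a) (js @ [p])"
      using dC' fp by (simp add: cmp_def pad_id max_def)
    finally show ?case .
  qed
qed

lemma dim_xiComp: 
  assumes "wd y" "wd x" "dim x = dim y" "p < dim y"
  shows "dim (xiComp p y x) = Suc (dim y)"
proof -
  have "dim (chain (\<lambda>j. Xi (bd j False x)) (bd (Suc p) True y) [0..<p]) = dim (bd (Suc p) True y)"
    using assms by (intro dim_chain) (auto simp: dim_bd)
  then show ?thesis using assms by (simp add: xiComp_def dim_bd)
qed

lemma wd_xiComp: "wd y \<Longrightarrow> wd x \<Longrightarrow> dim x = dim y \<Longrightarrow> p < dim y \<Longrightarrow> wd (xiComp p y x)"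
  unfolding xiComp_def by (auto intro!: wd_chain wd_bd simp: dim_bd)

lemma wf_wd: shows "wf k t \<Longrightarrow> wd t" and "eqv k t u \<Longrightarrow> wd t \<and> wd u \<and> dim t = dim u"
proof (induction rule: wf_eqv.inducts)
qed (auto simp: wd_bd dim_bd wd_xiComp dim_xiComp)

lemma wf_wd1: "wf k t \<Longrightarrow> wd t" using wf_wd(1) by blast
lemma eqv_dim: "eqv k t u \<Longrightarrow> dim t = dim u" using wf_wd(2) by blast
lemma eqv_wfL: "eqv k t u \<Longrightarrow> wf k t" by (rule wf_eqvL)
lemma eqv_wfR: "eqv k t u \<Longrightarrow> wf k u" by (rule wf_eqvR)

lemma wf_Idcp: "wf k t \<Longrightarrow> wf k ((Idc ^^ r) t)"
  by (induction r) (auto intro: wf_Idc)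

lemma wf_pad: "wf k t \<Longrightarrow> wf k (pad d t)"
  unfolding pad_def by (rule wf_Idcp)

lemma eqv_Idcp: "eqv k t u \<Longrightarrow> eqv k ((Idc ^^ r) t) ((Idc ^^ r) u)"
  by (induction r) (auto intro: eqv_Idc)

lemma eqv_pad: "eqv k t u \<Longrightarrow> eqv k (pad d t) (pad d u)"
  unfolding pad_def using eqv_dim eqv_Idcp by metis

lemma chain_cong:
  assumes "\<forall>l \<le> length js. wf k (chain f a (take l js))" "eqv k a a'" 
    "\<forall>j\<in>set js. eqv k (f j) (f' j)"
  shows "eqv k (chain f a js) (chain f' a' js)"
  using assms
proof (induction js rule: rev_induct)
  case Nil then show ?case by simp
next
  case (snoc p js)
  have IH: "eqv k (chain f a js) (chain f' a' js)"
  proof (rule snoc.IH)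
    show "\<forall>l\<le>length js. wf k (chain f a (take l js))"
    proof (intro allI impI)
      fix l assume "l \<le> length js"
      then show "wf k (chain f a (take l js))"
        using snoc.prems(1)[rule_format, of l] by (simp add: take_append)
    qed
  qed (use snoc.prems in auto)
  have d1: "dim (chain f a js) = dim (chain f' a' js)" using IH eqv_dim by blast
  have d2: "dim (f p) = dim (f' p)" using snoc.prems eqv_dim by auto
  have w: "wf k (chain f a (js @ [p]))" using snoc.prems(1)[rule_format, of "length (js @ [p])"] by simp
  show ?case using w d1 d2 snoc.prems IH
    by (auto simp: cmp_def intro!: eqv_Comp eqv_pad)
qed

definition P :: "nat \<Rightarrow> rt \<Rightarrow> bool" where
  "P k t \<longleftrightarrow> (\<forall>l i e e'. l < i \<longrightarrow> eqv k (bd l e (bd i e' t)) (bd l e t))"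

lemma P_transfer: "P k t \<Longrightarrow> eqv k t u \<Longrightarrow> P k u"
  unfolding P_def by (meson eqv_bd eqv_sym eqv_trans)

lemma P_Ori: "P k Ori"
  unfolding P_def by (auto intro: eqv_refl wf_Ori)

lemma P_Idc: "wf k t \<Longrightarrow> P k t \<Longrightarrow> P k (Idc t)"
  unfolding P_def using wf_wd1[of k t]
  by (auto intro!: eqv_refl wf_bd wf_Idc simp: dim_bd bd_id)

lemma P_Eta: "wf k t \<Longrightarrow> P k t \<Longrightarrow> P (Suc k) (Eta t)"
  unfolding P_def by (auto intro!: eqv_Eta)

lemma P_bd: assumes "wf k t" "P k t" shows "P k (bd j e'' t)"
  unfolding P_def
proof (intro allI impI)
  fix l i e e' assume li: "l < (i::nat)"
  have wdt: "wd t" using assms wf_wd1 by blast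
  show "eqv k (bd l e (bd i e' (bd j e'' t))) (bd l e (bd j e'' t))"
  proof (cases "j \<le> i")
    case True
    then have "bd i e' (bd j e'' t) = bd j e'' t" using wdt by (intro bd_id) (simp add: dim_bd)
    then show ?thesis using assms by (auto intro!: eqv_refl wf_bd)
  next
    case False
    have 1: "eqv k (bd i e' (bd j e'' t)) (bd i e' t)" using assms False unfolding P_def by auto
    have 2: "eqv k (bd l e (bd i e' t)) (bd l e t)" using assms li unfolding P_def by auto
    have 3: "eqv k (bd l e (bd j e'' t)) (bd l e t)" using assms li False unfolding P_def by auto
    show ?thesis using 1 2 3 by (meson eqv_bd eqv_sym eqv_trans)
  qed
qed

lemma P_Comp:
  assumes "wf k a" "wf k b" "dim a = dim b" "p < dim a" "eqv k (bd p False a) (bd p True b)"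
    "P k a" "P k b"
  shows "P k (Comp p a b)"
  unfolding P_def
proof (intro allI impI)
  fix l i e e' assume li: "l < (i::nat)"
  have wc: "wf k (Comp p a b)" using assms by (intro wf_Comp)
  have wda: "wd a" "wd b" using assms wf_wd1 by auto
  show "eqv k (bd l e (bd i e' (Comp p a b))) (bd l e (Comp p a b))"
  proof (cases "dim a \<le> i")
    case True
    then have eq: "bd i e' (Comp p a b) = Comp p a b" by simp
    show ?thesis unfolding eq by (rule eqv_refl[OF wf_bd[OF wc]])
  next
    case False
    note nd = False
    show ?thesis
    proof (cases "i \<le> p")
      case True
      have sa: "eqv k (bd l False a) (bd l False b)" and ta: "eqv k (bd l True a) (bd l True b)"
      proof -
        have "eqv k (bd l False (bd p False a)) (bd l False (bd p True b))" using assms(5) by (rule eqv_bd)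
        moreover have "eqv k (bd l False (bd p False a)) (bd l False a)" using assms(6) li True unfolding P_def by auto
        moreover have "eqv k (bd l False (bd p True b)) (bd l False b)" using assms(7) li True unfolding P_def by auto
        ultimately show "eqv k (bd l False a) (bd l False b)" by (meson eqv_sym eqv_trans)
      next
        have "eqv k (bd l True (bd p False a)) (bd l True (bd p True b))" using assms(5) by (rule eqv_bd)
        moreover have "eqv k (bd l True (bd p False a)) (bd l True a)" using assms(6) li True unfolding P_def by auto
        moreover have "eqv k (bd l True (bd p True b)) (bd l True b)" using assms(7) li True unfolding P_def by auto
        ultimately show "eqv k (bd l True a) (bd l True b)" by (meson eqv_sym eqv_trans)
      qed
      have pa: "eqv k (bd l e (bd i e' a)) (bd l e a)" "eqv k (bd l e (bd i e' b)) (bd l e b)"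
        using assms(6,7) li unfolding P_def by auto
      show ?thesis using True nd li pa sa ta 
        by (cases e; cases e') (auto intro: eqv_trans eqv_sym)
    next
      case False
      have pa: "eqv k (bd l e (bd i e' a)) (bd l e a)" "eqv k (bd l e (bd i e' b)) (bd l e b)"
        using assms(6,7) li unfolding P_def by auto
      have dbd: "dim (bd i e' a) = i" using nd wda by (simp add: dim_bd)
      show ?thesis
      proof (cases "l \<le> p")
        case True
        then show ?thesis using False nd li pa dbd by (cases e) auto
      next
        case lp: False
        have w2: "wf k (bd l e (bd i e' (Comp p a b)))" using wc by (intro wf_bd)
        show ?thesis using False nd li lp pa dbd w2 by (auto intro!: eqv_Comp)
      qed
    qed
  qed
qed

lemma chain_upt_Suc: "chain f a [0..<Suc j] = cmp j (chain f a [0..<j]) (f j)"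
  by simp

lemma dim_chain_upt:
  assumes "\<forall>p<i. dim (f p) \<le> Suc p" "dim a = i" "j \<le> i"
  shows "dim (chain f a [0..<j]) = i"
proof -
  have "\<forall>p\<in>set [0..<j]. dim (f p) \<le> dim a"
  proof
    fix p assume "p \<in> set [0..<j]"
    hence "p < i" using assms by auto
    hence "dim (f p) \<le> Suc p" using assms by auto
    thus "dim (f p) \<le> dim a" using \<open>p<i\<close> assms by linarith
  qed
  then show ?thesis using assms(2) by (simp add: dim_chain)
qed

lemma chain_left_step:
  assumes "wd a" "dim a = i" "\<forall>p<i. dim (f p) \<le> Suc p" "j < i"
  shows "chain f a [0..<Suc j] = Comp j (chain f a [0..<j]) (pad i (f j))"
proof -
  have "dim (chain f a [0..<j]) = i" using assms by (intro dim_chain_upt) auto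
  moreover have "dim (f j) \<le> i" using assms by force
  ultimately show ?thesis by (simp add: cmp_def pad_id max_def)
qed

lemma chain_bd_left:
  assumes "wd a" "dim a = i" "\<forall>p<i. dim (f p) \<le> Suc p" "l < i'" "i' \<le> i"
  shows "bd l True (chain f a [0..<i']) = chain f (bd l True a) [0..<l]"
  using assms(4,5)
proof (induction i')
  case 0 then show ?case by simp
next
  case (Suc j)
  have dC: "dim (chain f a [0..<j]) = i" using assms Suc by (intro dim_chain_upt) auto
  have "bd l True (chain f a [0..<Suc j]) = bd l True (chain f a [0..<j])"
    using chain_left_step[OF assms(1-3), of j] Suc dC by simp
  also have "\<dots> = chain f (bd l True a) [0..<l]"
  proof (cases "l = j")
    case True
    have fj: "\<forall>p<j. dim (f p) \<le> j"
    proof (intro allI impI)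
      fix p assume "p < j"
      then have "p < i" "Suc p \<le> j" using Suc by auto
      then show "dim (f p) \<le> j" using assms(3) by (meson le_trans)
    qed
    have "bd j True (chain f a [0..<j]) = chain f (bd j True a) [0..<j]"
      using assms Suc True fj by (intro chain_bd) auto
    then show ?thesis using True by simp
  next
    case False then show ?thesis using Suc by simp
  qed
  finally show ?case .
qed

lemma chain_bd_right:
  assumes "wd a" "dim a = i" "\<forall>p<i. dim (f p) \<le> Suc p" "l \<le> j" "j < i" "l \<le> dim (f j)"
  shows "bd l False (chain f a [0..<Suc j]) = bd l False (f j)"
proof -
  have dC: "dim (chain f a [0..<j]) = i" using assms by (intro dim_chain_upt) auto
  show ?thesis using chain_left_step[OF assms(1-3,5)] dC assms by (simp add: bd_pad_hi)
qed

abbreviation FF :: "rt \<Rightarrow> nat \<Rightarrow> rt" where "FF x \<equiv> (\<lambda>l. Xi (bd l False x))"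


lemma G3:
  assumes "wf k x" "P k x" "i \<le> dim x" "j \<le> i"
  shows "\<forall>l\<le>j. wf k (chain (FF x) (bd i True x) [0..<l])"
  using assms(4)
proof (induction j)
  case 0 then show ?case using assms by (auto intro: wf_bd)
next
  case (Suc j)
  have IH: "\<forall>l\<le>j. wf k (chain (FF x) (bd i True x) [0..<l])" using Suc by simp
  have wdx: "wd x" using assms wf_wd1 by blast
  let ?a = "bd i True x"
  have wda: "wd ?a" "dim ?a = i" using wdx assms by (auto simp: wd_bd dim_bd)
  have fd: "\<forall>p<i. dim (FF x p) \<le> Suc p" using wdx by (auto simp: dim_bd)
  have fd': "\<forall>p<i. dim (FF x p) = Suc p" using wdx assms by (auto simp: dim_bd)
  have ji: "j < i" using Suc by simp
  have eq: "chain (FF x) ?a [0..<Suc j] = Comp j (chain (FF x) ?a [0..<j]) (pad i (FF x j))"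
    by (rule chain_left_step[OF wda fd ji])
  have wC: "wf k (chain (FF x) ?a [0..<j])" using IH by simp
  have dC: "dim (chain (FF x) ?a [0..<j]) = i" using wda fd ji by (intro dim_chain_upt) auto
  have dF: "dim (FF x j) = Suc j" using wdx ji assms by (simp add: dim_bd)
  have s1: "bd j False (chain (FF x) ?a [0..<j]) = chain (FF x) (bd j False ?a) [0..<j]"
    using wda ji dF wdx by (intro chain_bd) (auto simp: dim_bd)
  have s2: "bd j True (pad i (FF x j)) = chain (FF (bd j False x)) (bd j False x) [0..<j]"
    using dF wdx ji assms by (simp add: bd_pad_hi dim_bd bd_id)
  have bdeq: "eqv k (bd j False (chain (FF x) ?a [0..<j])) (bd j True (pad i (FF x j)))"
    unfolding s1 s2
  proof (rule chain_cong)
    show "\<forall>l\<le>length [0..<j]. wf k (chain (FF x) (bd j False ?a) (take l [0..<j]))"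
    proof (intro allI impI)
      fix l assume "l \<le> length [0..<j]"
      then have lj: "l \<le> j" by simp
      have "bd j False (chain (FF x) ?a [0..<l]) = chain (FF x) (bd j False ?a) [0..<l]"
        using wda ji lj wdx by (intro chain_bd) (auto simp: dim_bd)
      moreover have "wf k (bd j False (chain (FF x) ?a [0..<l]))" using IH lj by (auto intro: wf_bd)
      ultimately show "wf k (chain (FF x) (bd j False ?a) (take l [0..<j]))" using lj by (simp add: take_upt)
    qed
    show "eqv k (bd j False ?a) (bd j False x)" using assms(2) ji unfolding P_def by auto
    show "\<forall>l\<in>set [0..<j]. eqv k (FF x l) (FF (bd j False x) l)"
    proof
      fix l assume "l \<in> set [0..<j]"
      then have h: "eqv k (bd l False (bd j False x)) (bd l False x)" using assms(2) unfolding P_def by auto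
      show "eqv k (FF x l) (FF (bd j False x) l)" using eqv_Xi[OF eqv_sym[OF h]] by simp
    qed
  qed
  have wCS: "wf k (chain (FF x) ?a [0..<Suc j])" unfolding eq
  proof (rule wf_Comp)
    show "wf k (pad i (FF x j))" by (intro wf_pad wf_Xi wf_bd assms(1))
    show "dim (chain (FF x) ?a [0..<j]) = dim (pad i (FF x j))" using dC dF ji by simp
    show "j < dim (chain (FF x) ?a [0..<j])" using dC ji by simp
  qed (use wC bdeq in auto)
  show ?case using IH wCS by (auto simp: le_Suc_eq)
qed

lemma P_Xi: assumes "wf k t" "P k t" shows "P k (Xi t)"
  unfolding P_def
proof (intro allI impI)
  fix l i e e' assume li: "l < (i::nat)"
  have wdt: "wd t" using assms wf_wd1 by blast
  have Pt: "\<And>l i e e'. l < i \<Longrightarrow> eqv k (bd l e (bd i e' t)) (bd l e t)" using assms(2) unfolding P_def by auto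
  have wXi: "wf k (Xi t)" using assms(1) by (rule wf_Xi)
  show "eqv k (bd l e (bd i e' (Xi t))) (bd l e (Xi t))"
  proof (cases "dim t < i")
    case True
    then have eq: "bd i e' (Xi t) = Xi t" by simp
    show ?thesis unfolding eq by (rule eqv_refl[OF wf_bd[OF wXi]])
  next
    case nt: False
    show ?thesis
    proof (cases e')
      case False
      let ?u = "bd (i-1) True t"
      have eq: "bd i e' (Xi t) = Xi ?u" using False nt li by simp
      have du: "dim ?u = i - 1" using wdt nt by (simp add: dim_bd)
      have wu: "wf k ?u" using assms by (intro wf_bd)
      show ?thesis
      proof (cases e)
        case False
        show ?thesis
        proof (cases "l = 0")
          case True then show ?thesis unfolding eq using False by (simp add: eqv_refl wf_Ori)
        next
          case l0: False
          have "eqv k (bd (l-1) True ?u) (bd (l-1) True t)" using Pt l0 li by simp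
          then show ?thesis unfolding eq using False l0 du nt li by (simp add: eqv_Xi)
        qed
      next
        case True
        have e1: "bd l e (bd i e' (Xi t)) = chain (FF ?u) (bd l True ?u) [0..<l]"
          unfolding eq using True du li by (simp; linarith)
        have e2: "bd l e (Xi t) = chain (FF t) (bd l True t) [0..<l]" using True nt li by simp
        have Pu: "P k ?u" using assms by (intro P_bd)
        have G: "\<forall>l'\<le>l. wf k (chain (FF ?u) (bd l True ?u) [0..<l'])"
          using G3[OF wu Pu, of l l] du li by simp
        show ?thesis unfolding e1 e2
        proof (rule chain_cong)
          show "\<forall>la\<le>length [0..<l]. wf k (chain (FF ?u) (bd l True ?u) (take la [0..<l]))"
            using G by (simp add: take_upt)
          show "eqv k (bd l True ?u) (bd l True t)"
          proof (cases "l < i - 1")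
            case True then show ?thesis using Pt by simp
          next
            case False
            then have "l = i - 1" using li by simp
            then show ?thesis using du wu by (simp add: bd_id eqv_refl)
          qed
          show "\<forall>j\<in>set [0..<l]. eqv k (FF ?u j) (FF t j)"
          proof
            fix j assume "j \<in> set [0..<l]"
            then have h: "eqv k (bd j False ?u) (bd j False t)" using Pt li by simp
            show "eqv k (FF ?u j) (FF t j)" using eqv_Xi[OF h] by simp
          qed
        qed
      qed
    next
      case True
      let ?a = "bd i True t"
      have eq: "bd i e' (Xi t) = chain (FF t) ?a [0..<i]" using True nt by simp
      have wda: "wd ?a" "dim ?a = i" using wdt nt by (auto simp: wd_bd dim_bd)
      have fd: "\<forall>p<i. dim (FF t p) \<le> Suc p" using wdt by (auto simp: dim_bd)
      show ?thesis
      proof (cases e)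
        case True
        have e1: "bd l e (bd i e' (Xi t)) = chain (FF t) (bd l True ?a) [0..<l]"
          unfolding eq using True chain_bd_left[OF wda fd li] by simp
        have e2: "bd l e (Xi t) = chain (FF t) (bd l True t) [0..<l]" using True nt li by simp
        have G: "\<forall>l'\<le>i. wf k (chain (FF t) ?a [0..<l'])"
          using G3[OF assms, of i i] nt by simp
        show ?thesis unfolding e1 e2
        proof (rule chain_cong)
          show "\<forall>la\<le>length [0..<l]. wf k (chain (FF t) (bd l True ?a) (take la [0..<l]))"
          proof (intro allI impI)
            fix la assume "la \<le> length [0..<l]"
            then have la: "la \<le> l" by simp
            have fj: "\<forall>p\<in>set [0..<la]. p < l \<and> dim (FF t p) \<le> l"
              using la li fd by (auto simp: dim_bd wdt)
            have "bd l True (chain (FF t) ?a [0..<la]) = chain (FF t) (bd l True ?a) [0..<la]"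
              using wda li fj by (intro chain_bd) auto
            moreover have "wf k (bd l True (chain (FF t) ?a [0..<la]))" using G la li by (auto intro: wf_bd)
            ultimately show "wf k (chain (FF t) (bd l True ?a) (take la [0..<l]))" using la by (simp add: take_upt)
          qed
          show "eqv k (bd l True ?a) (bd l True t)" using Pt li by simp
          show "\<forall>j\<in>set [0..<l]. eqv k (FF t j) (FF t j)"
            using assms by (auto intro!: eqv_refl wf_Xi wf_bd)
        qed
      next
        case False
        obtain j0 where i: "i = Suc j0" using li by (cases i) auto
        have dF: "dim (FF t j0) = Suc j0" using wdt nt i by (simp add: dim_bd)
        have e1: "bd l e (bd i e' (Xi t)) = bd l False (FF t j0)"
          unfolding eq using False chain_bd_right[OF wda[unfolded i] fd[unfolded i], of l j0] li i dF by simp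
        have dv: "dim (bd j0 False t) = j0" using wdt nt i by (simp add: dim_bd)
        show ?thesis
        proof (cases "l = 0")
          case True then show ?thesis using e1 False by (simp add: eqv_refl wf_Ori)
        next
          case l0: False
          have "eqv k (bd (l-1) True (bd j0 False t)) (bd (l-1) True t)" using Pt l0 li i by simp
          then show ?thesis using e1 False l0 dv nt li i by (simp add: eqv_Xi)
        qed
      qed
    qed
  qed
qed

lemma wf_P: shows "wf k t \<Longrightarrow> P k t" and "eqv k t u \<Longrightarrow> P k t \<and> P k u"
proof (induction rule: wf_eqv.inducts)
  case (wf_Ori k) then show ?case by (rule P_Ori)
next
  case (wf_Xi k t) then show ?case by (intro P_Xi)
next
  case (wf_Idc k t) then show ?case by (intro P_Idc)
next
  case (wf_Eta k t) then show ?case by (intro P_Eta)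
next
  case (wf_Comp k a b p) then show ?case by (intro P_Comp)
next
  case (wf_bd k t i e) then show ?case by (intro P_bd)
next
  case (wf_eqvL k t u) then show ?case by blast
next
  case (wf_eqvR k t u) then show ?case by blast
next
  case (eqv_refl k t) then show ?case by blast
next
  case (eqv_sym k t u) then show ?case by blast
next
  case (eqv_trans k t u v) then show ?case by blast
next
  case (eqv_Xi k t u) then show ?case using P_Xi eqv_wfL eqv_wfR by blast
next
  case (eqv_Idc k t u) then show ?case using P_Idc eqv_wfL eqv_wfR by blast
next
  case (eqv_Eta k t u) then show ?case using P_Eta eqv_wfL eqv_wfR by blast
next
  case (eqv_Comp k a a' b b' p)
  have "eqv k (Comp p a b) (Comp p a' b')" using eqv_Comp.hyps by (rule wf_eqv.eqv_Comp)
  then show ?case using eqv_Comp.IH P_transfer by blast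
next
  case (eqv_bd k t u i e) then show ?case using P_bd eqv_wfL eqv_wfR by blast
next
  case (eqv_assoc k p c b a)
  have "eqv k (Comp p (Comp p c b) a) (Comp p c (Comp p b a))" using eqv_assoc.hyps by (rule wf_eqv.eqv_assoc)
  then show ?case using eqv_assoc.IH P_transfer by blast
next
  case (eqv_unitL k a p)
  have "eqv k (Comp p (pad (dim a) (bd p True a)) a) a" using eqv_unitL.hyps by (rule wf_eqv.eqv_unitL)
  then show ?case using eqv_unitL.IH P_transfer eqv_sym by blast
next
  case (eqv_unitR k a p)
  have "eqv k (Comp p a (pad (dim a) (bd p False a))) a" using eqv_unitR.hyps by (rule wf_eqv.eqv_unitR)
  then show ?case using eqv_unitR.IH P_transfer eqv_sym by blast
next
  case (eqv_interchange p q k d c b a)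
  have "eqv k (Comp p (Comp q d c) (Comp q b a)) (Comp q (Comp p d b) (Comp p c a))"
    using eqv_interchange.hyps by (rule wf_eqv.eqv_interchange)
  then show ?case using eqv_interchange.IH P_transfer by blast
next
  case (eqv_id_comp k p a b)
  have e: "eqv k (Idc (Comp p a b)) (Comp p (Idc a) (Idc b))" using eqv_id_comp.hyps by (rule wf_eqv.eqv_id_comp)
  have "P k (Idc (Comp p a b))" using eqv_id_comp P_Idc by blast
  then show ?case using e P_transfer by blast
next
  case (eqv_Eta_Comp k p a b)
  have e: "eqv (Suc k) (Eta (Comp p a b)) (Comp p (Eta a) (Eta b))" using eqv_Eta_Comp.hyps by (rule wf_eqv.eqv_Eta_Comp)
  have "P (Suc k) (Eta (Comp p a b))" using eqv_Eta_Comp P_Eta by blast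
  then show ?case using e P_transfer by blast
next
  case (eqv_Eta_Idc k a)
  have e: "eqv (Suc k) (Eta (Idc a)) (Idc (Eta a))" using eqv_Eta_Idc.hyps by (rule wf_eqv.eqv_Eta_Idc)
  have "P (Suc k) (Eta (Idc a))" using eqv_Eta_Idc P_Eta P_Idc wf_Idc by blast
  then show ?case using e P_transfer by blast
next
  case (eqv_Xi_Comp k p y x)
  have e: "eqv k (Xi (Comp p y x)) (xiComp p y x)" using eqv_Xi_Comp.hyps by (rule wf_eqv.eqv_Xi_Comp)
  have "P k (Xi (Comp p y x))" using eqv_Xi_Comp P_Xi by blast
  then show ?case using e P_transfer by blast
next
  case (eqv_Xi_Idc k u)
  have e: "eqv k (Xi (Idc u)) (Idc (Xi u))" using eqv_Xi_Idc.hyps by (rule wf_eqv.eqv_Xi_Idc)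
  have "P k (Xi (Idc u))" using eqv_Xi_Idc P_Xi P_Idc wf_Idc by blast
  then show ?case using e P_transfer by blast
next
  case (eqv_Xi_Xi k u)
  have e: "eqv k (Xi (Xi u)) (Idc (Xi u))" using eqv_Xi_Xi.hyps by (rule wf_eqv.eqv_Xi_Xi)
  have "P k (Xi (Xi u))" using eqv_Xi_Xi P_Xi wf_Xi by blast
  then show ?case using e P_transfer by blast
next
  case (eqv_Xi_Ori k)
  have e: "eqv k (Xi Ori) (Idc Ori)" by (rule wf_eqv.eqv_Xi_Ori)
  have "P k (Xi Ori)" using P_Xi P_Ori wf_Ori by blast
  then show ?case using e P_transfer by blast
qed

lemma wfP: "wf k t \<Longrightarrow> P k t" using wf_P(1) by blast

lemma G3b:
  assumes "wf k x" "j < i" "i \<le> dim x"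
  shows "eqv k (bd j False (chain (FF x) (bd i True x) [0..<j])) (bd j True (pad i (FF x j)))"
proof -
  have Px: "P k x" using assms wfP by blast
  have IH: "\<forall>l\<le>j. wf k (chain (FF x) (bd i True x) [0..<l])" using G3[OF assms(1) Px assms(3), of j] assms by simp
  have wdx: "wd x" using assms wf_wd1 by blast
  let ?a = "bd i True x"
  have wda: "wd ?a" "dim ?a = i" using wdx assms by (auto simp: wd_bd dim_bd)
  have ji: "j < i" using assms by simp
  have dF: "dim (FF x j) = Suc j" using wdx ji assms by (simp add: dim_bd)
  have s1: "bd j False (chain (FF x) ?a [0..<j]) = chain (FF x) (bd j False ?a) [0..<j]"
    using wda ji dF wdx by (intro chain_bd) (auto simp: dim_bd)
  have s2: "bd j True (pad i (FF x j)) = chain (FF (bd j False x)) (bd j False x) [0..<j]"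
    using dF wdx ji assms by (simp add: bd_pad_hi dim_bd bd_id)
  show ?thesis
    unfolding s1 s2
  proof (rule chain_cong)
    show "\<forall>l\<le>length [0..<j]. wf k (chain (FF x) (bd j False ?a) (take l [0..<j]))"
    proof (intro allI impI)
      fix l assume "l \<le> length [0..<j]"
      then have lj: "l \<le> j" by simp
      have "bd j False (chain (FF x) ?a [0..<l]) = chain (FF x) (bd j False ?a) [0..<l]"
        using wda ji lj wdx by (intro chain_bd) (auto simp: dim_bd)
      moreover have "wf k (bd j False (chain (FF x) ?a [0..<l]))" using IH lj by (auto intro: wf_bd)
      ultimately show "wf k (chain (FF x) (bd j False ?a) (take l [0..<j]))" using lj by (simp add: take_upt)
    qed
    show "eqv k (bd j False ?a) (bd j False x)" using Px ji unfolding P_def by auto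
    show "\<forall>l\<in>set [0..<j]. eqv k (FF x l) (FF (bd j False x) l)"
    proof
      fix l assume "l \<in> set [0..<j]"
      then have h: "eqv k (bd l False (bd j False x)) (bd l False x)" using Px unfolding P_def by auto
      show "eqv k (FF x l) (FF (bd j False x) l)" using eqv_Xi[OF eqv_sym[OF h]] by simp
    qed
  qed
qed

inductive_set LR :: "nat \<Rightarrow> nat \<Rightarrow> (rt \<Rightarrow>\<^sub>0 int) set" for k d where
  LR_eqv: "\<lbrakk>eqv k t u; dim t = d\<rbrakk> \<Longrightarrow> frag_of t - frag_of u \<in> LR k d"
| LR_comp: "\<lbrakk>wf k a; wf k b; dim a = dim b; j < dim a; eqv k (bd j False a) (bd j True b); dim a = d\<rbrakk> \<Longrightarrow>
     frag_of (Comp j a b) - frag_of a - frag_of b \<in> LR k d"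
| LR_zero: "0 \<in> LR k d"
| LR_add: "\<lbrakk>f \<in> LR k d; g \<in> LR k d\<rbrakk> \<Longrightarrow> f + g \<in> LR k d"
| LR_neg: "f \<in> LR k d \<Longrightarrow> - f \<in> LR k d"

lemma LR_sub: "f \<in> LR k d \<Longrightarrow> f \<in> lam_rel k d"
proof (induction rule: LR.induct)
  case (LR_eqv t u) then show ?case by (auto intro: lam_rel.intros)
next
  case (LR_comp a b j)
  have "wf k (Comp j a b)" using LR_comp by (intro wf_Comp)
  then show ?case using LR_comp by (auto intro: lam_rel.intros)
qed (auto intro: lam_rel.intros)

lemma LR_diff: "f \<in> LR k d \<Longrightarrow> g \<in> LR k d \<Longrightarrow> f - g \<in> LR k d"
  using LR_add[OF _ LR_neg] by (metis diff_conv_add_uminus)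

lemma LR_sum: "finite I \<Longrightarrow> (\<forall>i\<in>I. f i \<in> LR k d) \<Longrightarrow> (\<Sum>i\<in>I. f i) \<in> LR k d"
  by (induction I rule: finite_induct) (auto intro: LR_zero LR_add)

lemma LR_Idc: assumes "wf k (Idc u)" shows "frag_of (Idc u) \<in> LR k (Suc (dim u))"
proof -
  let ?a = "Idc u" let ?p = "dim u"
  have wu: "wd u" using assms wf_wd1 by fastforce
  have bd: "bd ?p True ?a = u" "bd ?p False ?a = u" by (auto simp: bd_id)
  have pd: "pad (dim ?a) (bd ?p True ?a) = Idc u" unfolding bd by (simp add: pad_def)
  have e: "eqv k (Comp ?p (Idc u) (Idc u)) (Idc u)" using eqv_unitL[OF assms, of ?p] pd by simp
  have wu': "wf k u" using wf_bd[OF assms, of ?p True] bd by simp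
  have 1: "frag_of (Comp ?p (Idc u) (Idc u)) - frag_of (Idc u) \<in> LR k (Suc (dim u))"
    using e by (intro LR_eqv) auto
  have 2: "frag_of (Comp ?p (Idc u) (Idc u)) - frag_of (Idc u) - frag_of (Idc u) \<in> LR k (Suc (dim u))"
    using assms bd wu' by (intro LR_comp) (auto intro: eqv_refl)
  have "frag_of (Idc u) = (frag_of (Comp ?p (Idc u) (Idc u)) - frag_of (Idc u)) -
          (frag_of (Comp ?p (Idc u) (Idc u)) - frag_of (Idc u) - frag_of (Idc u))" by simp
  then show ?thesis using LR_diff[OF 1 2] by simp
qed

lemma LR_pad: assumes "wf k u" "dim u < d" shows "frag_of (pad d u) \<in> LR k d"
proof -
  obtain r where r: "d - dim u = Suc r" using assms by (cases "d - dim u") auto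
  have "pad d u = Idc ((Idc ^^ r) u)" unfolding pad_def r by simp
  moreover have "wf k (Idc ((Idc ^^ r) u))" using assms by (intro wf_Idc wf_Idcp)
  moreover have "Suc (dim ((Idc ^^ r) u)) = d" using r assms by simp
  ultimately show ?thesis using LR_Idc by metis
qed

definition EtaM :: "(rt \<Rightarrow>\<^sub>0 int) \<Rightarrow> (rt \<Rightarrow>\<^sub>0 int)" where
  "EtaM f = frag_extend (\<lambda>t. frag_of (Eta t)) f"
definition XiM :: "(rt \<Rightarrow>\<^sub>0 int) \<Rightarrow> (rt \<Rightarrow>\<^sub>0 int)" where
  "XiM f = frag_extend (\<lambda>t. frag_of (Xi t)) f"

lemma LR_Eta: "f \<in> LR k d \<Longrightarrow> EtaM f \<in> LR (Suc k) d"
proof (induction rule: LR.induct)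
  case (LR_eqv t u)
  then show ?case by (auto simp: EtaM_def frag_extend_diff intro!: LR.LR_eqv eqv_Eta)
next
  case (LR_comp a b j)
  have wc: "wf k (Comp j a b)" using LR_comp by (intro wf_Comp)
  have 1: "frag_of (Eta (Comp j a b)) - frag_of (Comp j (Eta a) (Eta b)) \<in> LR (Suc k) d"
    using LR_comp wc by (intro LR.LR_eqv eqv_Eta_Comp) auto
  have 2: "frag_of (Comp j (Eta a) (Eta b)) - frag_of (Eta a) - frag_of (Eta b) \<in> LR (Suc k) d"
    using LR_comp by (intro LR.LR_comp) (auto intro: wf_Eta eqv_Eta)
  have "EtaM (frag_of (Comp j a b) - frag_of a - frag_of b) =
    (frag_of (Eta (Comp j a b)) - frag_of (Comp j (Eta a) (Eta b))) + (frag_of (Comp j (Eta a) (Eta b)) - frag_of (Eta a) - frag_of (Eta b))"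
    by (simp add: EtaM_def frag_extend_diff frag_extend_add algebra_simps)
  then show ?case using LR_add[OF 1 2] by simp
next
  case LR_zero then show ?case by (simp add: EtaM_def LR.LR_zero)
next
  case (LR_add f g) then show ?case by (simp add: EtaM_def frag_extend_add LR.LR_add)
next
  case (LR_neg f) then show ?case by (simp add: EtaM_def frag_extend_minus LR.LR_neg)
qed

lemma Xi_add:
  assumes wa: "wf k a" and wb: "wf k b" and dab: "dim a = dim b" and ja: "j < dim a"
    and bnd: "eqv k (bd j False a) (bd j True b)"
  shows "frag_of (Xi (Comp j a b)) - frag_of (Xi a) - frag_of (Xi b) \<in> LR k (Suc (dim a))"
proof -
  define d where "d = dim a"
  have Pa: "P k a" and Pb: "P k b" using wa wb wfP by auto
  have wda: "wd a" and wdb: "wd b" using wa wb wf_wd1 by auto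
  have sl: "\<forall>l<j. eqv k (bd l False a) (bd l False b)"
  proof (intro allI impI)
    fix l assume lj: "l < j"
    have "eqv k (bd l False (bd j False a)) (bd l False (bd j True b))" using bnd by (rule eqv_bd)
    moreover have "eqv k (bd l False (bd j False a)) (bd l False a)" using Pa lj unfolding P_def by auto
    moreover have "eqv k (bd l False (bd j True b)) (bd l False b)" using Pb lj unfolding P_def by auto
    ultimately show "eqv k (bd l False a) (bd l False b)" by (meson eqv_sym eqv_trans)
  qed
  let ?acc = "bd (Suc j) True a"
  define CH where "CH = chain (FF b) ?acc [0..<j]"
  define CHa where "CHa = chain (FF a) ?acc [0..<j]"
  have GA: "\<forall>l\<le>j. wf k (chain (FF a) ?acc [0..<l])" using G3[OF wa Pa, of "Suc j" j] ja by simp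
  have eCH: "eqv k CHa CH" unfolding CHa_def CH_def
  proof (rule chain_cong)
    show "\<forall>l\<le>length [0..<j]. wf k (chain (FF a) ?acc (take l [0..<j]))" using GA by (simp add: take_upt)
    show "eqv k ?acc ?acc" using wa by (intro eqv_refl wf_bd)
    show "\<forall>l\<in>set [0..<j]. eqv k (FF a l) (FF b l)"
    proof
      fix l assume "l \<in> set [0..<j]"
      then have h: "eqv k (bd l False a) (bd l False b)" using sl by simp
      show "eqv k (FF a l) (FF b l)" using eqv_Xi[OF h] by simp
    qed
  qed
  have wCH: "wf k CH" using eCH by (rule eqv_wfR)
  have dacc: "dim ?acc = Suc j" "wd ?acc" using wda ja by (auto simp: dim_bd wd_bd)
  have fdb: "\<forall>p<Suc j. dim (FF b p) \<le> Suc p" using wdb by (auto simp: dim_bd)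
  have dCH: "dim CH = Suc j" unfolding CH_def using dacc fdb by (intro dim_chain_upt) auto
  have cQ: "cmp j CH (Xi b) = Comp j (pad (Suc d) CH) (Xi b)"
    using dCH ja dab unfolding d_def by (simp add: cmp_def pad_id max_def)
  have e1: "bd j False (pad (Suc d) CH) = chain (FF b) (bd j False ?acc) [0..<j]"
  proof -
    have "bd j False (pad (Suc d) CH) = bd j False CH" using dCH by (simp add: bd_pad_hi)
    also have "\<dots> = chain (FF b) (bd j False ?acc) [0..<j]" unfolding CH_def
      using dacc wdb ja dab by (intro chain_bd) (auto simp: dim_bd)
    finally show ?thesis .
  qed
  have e2: "bd j True (Xi b) = chain (FF b) (bd j True b) [0..<j]" using ja dab by simp
  have bQ: "eqv k (bd j False (pad (Suc d) CH)) (bd j True (Xi b))"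
  proof -
    have "eqv k (chain (FF b) (bd j True b) [0..<j]) (chain (FF b) (bd j False ?acc) [0..<j])"
    proof (rule chain_cong)
      show "\<forall>l\<le>length [0..<j]. wf k (chain (FF b) (bd j True b) (take l [0..<j]))"
        using G3[OF wb Pb, of j j] ja dab by (simp add: take_upt)
      have "eqv k (bd j False ?acc) (bd j False a)" using Pa unfolding P_def by auto
      then show "eqv k (bd j True b) (bd j False ?acc)" using bnd by (meson eqv_sym eqv_trans)
      show "\<forall>l\<in>set [0..<j]. eqv k (FF b l) (FF b l)" using wb by (auto intro!: eqv_refl wf_Xi wf_bd)
    qed
    then show ?thesis unfolding e1 e2 by (rule eqv_sym)
  qed
  have wQ: "wf k (cmp j CH (Xi b))" unfolding cQ
    using wCH wb bQ dCH ja dab unfolding d_def by (intro wf_Comp wf_pad wf_Xi) auto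
  have dQ: "dim (cmp j CH (Xi b)) = Suc d" using dCH ja dab unfolding d_def by simp
  have XC: "xiComp j a b = Comp (Suc j) (cmp j CH (Xi b)) (Xi a)"
    unfolding xiComp_def CH_def[symmetric] using dQ unfolding d_def by (simp add: cmp_def pad_id)
  have bX: "eqv k (bd (Suc j) False (cmp j CH (Xi b))) (bd (Suc j) True (Xi a))"
  proof -
    have l: "bd (Suc j) False (cmp j CH (Xi b)) = Comp j CH (Xi (bd j True b))"
      unfolding cQ using dCH ja dab unfolding d_def by (simp add: bd_pad_lo pad_id)
    have fda: "\<forall>p<Suc j. dim (FF a p) \<le> Suc p" using wda by (auto simp: dim_bd)
    have r: "bd (Suc j) True (Xi a) = Comp j CHa (FF a j)"
    proof -
      have "bd (Suc j) True (Xi a) = chain (FF a) ?acc [0..<Suc j]" using ja by simp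
      also have "\<dots> = Comp j CHa (pad (Suc j) (FF a j))" unfolding CHa_def
        using chain_left_step[OF dacc(2) dacc(1) fda] by simp
      also have "\<dots> = Comp j CHa (FF a j)" using wda ja by (simp add: pad_id dim_bd)
      finally show ?thesis .
    qed
    have w: "wf k (Comp j CH (Xi (bd j True b)))" using wf_bd[OF wQ, of "Suc j" False] l by simp
    have "eqv k (Xi (bd j True b)) (FF a j)" using eqv_Xi[OF eqv_sym[OF bnd]] by simp
    then show ?thesis unfolding l r using w eqv_sym[OF eCH] by (intro eqv_Comp)
  qed
  have wC: "wf k (Comp j a b)" using assms by (intro wf_Comp)
  have 1: "frag_of (Xi (Comp j a b)) - frag_of (xiComp j a b) \<in> LR k (Suc d)"
    using wC unfolding d_def by (intro LR_eqv eqv_Xi_Comp) auto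
  have 2: "frag_of (xiComp j a b) - frag_of (cmp j CH (Xi b)) - frag_of (Xi a) \<in> LR k (Suc d)"
    unfolding XC using wQ wa bX dQ ja unfolding d_def by (intro LR_comp wf_Xi) auto
  have 3: "frag_of (cmp j CH (Xi b)) - frag_of (pad (Suc d) CH) - frag_of (Xi b) \<in> LR k (Suc d)"
    unfolding cQ using wCH wb bQ dCH ja dab unfolding d_def by (intro LR_comp wf_Xi wf_pad) auto
  have 4: "frag_of (pad (Suc d) CH) \<in> LR k (Suc d)" using wCH dCH ja unfolding d_def by (intro LR_pad) auto
  have "frag_of (Xi (Comp j a b)) - frag_of (Xi a) - frag_of (Xi b) =
    (frag_of (Xi (Comp j a b)) - frag_of (xiComp j a b)) + (frag_of (xiComp j a b) - frag_of (cmp j CH (Xi b)) - frag_of (Xi a))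
    + (frag_of (cmp j CH (Xi b)) - frag_of (pad (Suc d) CH) - frag_of (Xi b)) + frag_of (pad (Suc d) CH)"
    by (simp add: algebra_simps)
  then show ?thesis using LR_add[OF LR_add[OF LR_add[OF 1 2] 3] 4] unfolding d_def by simp
qed

lemma LR_Xi: "f \<in> LR k d \<Longrightarrow> XiM f \<in> LR k (Suc d)"
proof (induction rule: LR.induct)
  case (LR_eqv t u)
  then show ?case by (auto simp: XiM_def frag_extend_diff intro!: LR.LR_eqv eqv_Xi)
next
  case (LR_comp a b j)
  then show ?case using Xi_add[of k a b j] by (simp add: XiM_def frag_extend_diff)
next
  case LR_zero then show ?case by (simp add: XiM_def LR.LR_zero)
next
  case (LR_add f g) then show ?case by (simp add: XiM_def frag_extend_add LR.LR_add)
next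
  case (LR_neg f) then show ?case by (simp add: XiM_def frag_extend_minus LR.LR_neg)
qed

lemma L_chain:
  assumes wy: "wf k y" and dy: "dim y = i" and i1: "1 \<le> i"
  shows "frag_of (chain (FF y) y [0..<i]) - frag_of y - frag_of (FF y (i-1)) \<in> LR k i"
proof -
  have wdy: "wd y" using wy wf_wd1 by blast
  have Py: "P k y" using wy wfP by blast
  have bdy: "bd i True y = y" using dy by (simp add: bd_id)
  have fd: "\<forall>p<i. dim (FF y p) \<le> Suc p" using wdy by (auto simp: dim_bd)
  have G: "\<forall>l\<le>i. wf k (chain (FF y) y [0..<l])" using G3[OF wy Py, of i i] dy by (simp add: bdy)
  have step: "frag_of (chain (FF y) y [0..<Suc j]) - frag_of (chain (FF y) y [0..<j]) - frag_of (pad i (FF y j)) \<in> LR k i"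
    if ji: "j < i" for j
  proof -
    have eq: "chain (FF y) y [0..<Suc j] = Comp j (chain (FF y) y [0..<j]) (pad i (FF y j))"
      by (rule chain_left_step[OF wdy dy fd ji])
    have dC: "dim (chain (FF y) y [0..<j]) = i" using fd dy ji by (intro dim_chain_upt) auto
    have dF: "dim (FF y j) = Suc j" using wdy ji dy by (simp add: dim_bd)
    have b: "eqv k (bd j False (chain (FF y) y [0..<j])) (bd j True (pad i (FF y j)))"
      using G3b[OF wy ji] dy by (simp add: bdy)
    show ?thesis unfolding eq
      using G ji dC dF b wy by (intro LR_comp wf_pad wf_Xi wf_bd) auto
  qed
  have low: "frag_of (chain (FF y) y [0..<j]) - frag_of y \<in> LR k i" if "j < i" for j
    using that
  proof (induction j)
    case 0 then show ?case by (simp add: LR_zero)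
  next
    case (Suc j)
    have dF: "dim (FF y j) = Suc j" using wdy Suc dy by (simp add: dim_bd)
    have p: "frag_of (pad i (FF y j)) \<in> LR k i" using Suc dF wy by (intro LR_pad wf_Xi wf_bd) auto
    have jl: "j < i" "j < i" using Suc by auto
    have eq: "frag_of (chain (FF y) y [0..<Suc j]) - frag_of y =
      (frag_of (chain (FF y) y [0..<Suc j]) - frag_of (chain (FF y) y [0..<j]) - frag_of (pad i (FF y j)))
      + (frag_of (chain (FF y) y [0..<j]) - frag_of y) + frag_of (pad i (FF y j))" by (simp only: algebra_simps)
    show ?case unfolding eq by (rule LR_add[OF LR_add[OF step[OF jl(1)] Suc.IH[OF jl(2)]] p])
  qed
  obtain i' where ii: "i = Suc i'" using i1 by (cases i) auto
  have pd: "pad i (FF y i') = FF y i'" using wdy dy ii by (simp add: pad_id dim_bd)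
  have i'i: "i' < i" using ii by simp
  have eq: "frag_of (chain (FF y) y [0..<i]) - frag_of y - frag_of (FF y (i-1)) =
     (frag_of (chain (FF y) y [0..<Suc i']) - frag_of (chain (FF y) y [0..<i']) - frag_of (pad i (FF y i')))
     + (frag_of (chain (FF y) y [0..<i']) - frag_of y)" unfolding ii pd[unfolded ii] by (simp only: algebra_simps diff_Suc_1)
  show ?thesis unfolding eq by (rule LR_add[OF step[OF i'i] low[OF i'i]])
qed

lemma dim_Etap[simp]: "dim ((Eta ^^ r) t) = dim t"
  by (induction r) auto

lemma dim_brk: "dim (brk xs) = length xs - 1"
  by (induction xs rule: brk.induct) (auto simp: funpow_swap1)

lemma wf_Etap: "wf k t \<Longrightarrow> wf (k + r) ((Eta ^^ r) t)"
  by (induction r) (auto intro: wf_Eta)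

lemma bd_Etap: "bd i e ((Eta ^^ r) t) = (Eta ^^ r) (bd i e t)"
  by (induction r) auto

lemma wf_brk: "\<forall>a\<in>set xs. a \<le> k \<Longrightarrow> wf k (brk xs)"
proof (induction xs arbitrary: k rule: brk.induct)
  case 1 then show ?case by (simp add: wf_Ori)
next
  case (2 i)
  then have "wf (0 + i) ((Eta ^^ i) Ori)" by (intro wf_Etap wf_Ori)
  then have "wf (k - i + i) ((Eta ^^ i) Ori)" using wf_Etap[OF wf_Ori, of "k - i" i] by simp
  then show ?case using 2 by simp
next
  case (3 i j r)
  have "wf (k - i) (brk (map (\<lambda>a. a - i) (j # r)))" using 3 by (intro "3.IH") auto
  then have "wf (k - i + i) ((Eta ^^ i) (Xi (brk (map (\<lambda>a. a - i) (j # r)))))" by (intro wf_Etap wf_Xi)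
  then show ?case using 3 by simp
qed

lemma Etap_brk: "vs \<noteq> [] \<Longrightarrow> (Eta ^^ a) (brk vs) = brk (map (\<lambda>x. x + a) vs)"
proof (induction vs rule: brk.induct)
  case (2 i) then show ?case by (metis brk.simps(2) funpow_add comp_apply add.commute list.simps(8,9))
next
  case (3 i j r)
  have m: "map (\<lambda>x. x - (i + a)) (map (\<lambda>x. x + a) (j # r)) = map (\<lambda>x. x - i) (j # r)" by simp
  have 1: "(Eta ^^ a) (brk (i # j # r)) = (Eta ^^ (i + a)) (Xi (brk (map (\<lambda>x. x - i) (j # r))))"
    by (metis brk.simps(3) funpow_add comp_apply add.commute)
  have 2: "brk (map (\<lambda>x. x + a) (i # j # r)) = (Eta ^^ (i + a)) (Xi (brk (map (\<lambda>x. x - (i + a)) (map (\<lambda>x. x + a) (j # r)))))"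
    by (simp only: list.map brk.simps)
  show ?case unfolding 1 2 m ..
qed simp

definition Ep :: "nat \<Rightarrow> (rt \<Rightarrow>\<^sub>0 int) \<Rightarrow> (rt \<Rightarrow>\<^sub>0 int)" where
  "Ep a f = frag_extend (\<lambda>t. frag_of ((Eta ^^ a) t)) f"
definition Phi :: "nat \<Rightarrow> (rt \<Rightarrow>\<^sub>0 int) \<Rightarrow> (rt \<Rightarrow>\<^sub>0 int)" where
  "Phi a f = frag_extend (\<lambda>t. frag_of ((Eta ^^ a) (Xi t))) f"

lemma LR_Ep: "f \<in> LR k d \<Longrightarrow> Ep a f \<in> LR (k + a) d"
proof (induction a)
  case 0 then show ?case by (simp add: Ep_def frag_expansion[symmetric])
next
  case (Suc a)
  have "Ep (Suc a) f = EtaM (Ep a f)"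
    unfolding Ep_def EtaM_def using frag_extend_compose[of "\<lambda>t. frag_of (Eta t)" "Eta ^^ a" f]
    by (simp add: comp_def)
  then show ?case using LR_Eta[OF Suc.IH[OF Suc.prems]] by simp
qed

lemma LR_Phi: "f \<in> LR k d \<Longrightarrow> Phi a f \<in> LR (k + a) (Suc d)"
proof -
  assume f: "f \<in> LR k d"
  have "Phi a f = Ep a (XiM f)"
    unfolding Ep_def XiM_def Phi_def using frag_extend_compose[of "\<lambda>t. frag_of ((Eta ^^ a) t)" "Xi" f]
    by (simp add: comp_def)
  then show ?thesis using LR_Ep[OF LR_Xi[OF f]] by simp
qed

lemma Phi_diff: "Phi a (f - g) = Phi a f - Phi a g" by (simp add: Phi_def frag_extend_diff)
lemma Ep_diff: "Ep a (f - g) = Ep a f - Ep a g" by (simp add: Ep_def frag_extend_diff)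
lemma Phi_of[simp]: "Phi a (frag_of t) = frag_of ((Eta ^^ a) (Xi t))" by (simp add: Phi_def)
lemma Ep_of[simp]: "Ep a (frag_of t) = frag_of ((Eta ^^ a) t)" by (simp add: Ep_def)
lemma Phi_sum: "finite I \<Longrightarrow> Phi a (\<Sum>i\<in>I. g i) = (\<Sum>i\<in>I. Phi a (g i))"
  by (simp add: Phi_def frag_extend_sum comp_def)

lemma face_Suc_Cons: "face (Suc j) (x # xs) = x # face j xs" by (simp add: face_def)
lemma face_0_Cons: "face 0 (x # xs) = xs" by (simp add: face_def)
lemma face_map: "face j (map f xs) = map f (face j xs)" by (simp add: face_def take_map drop_map)
lemma length_face: "j < length xs \<Longrightarrow> length (face j xs) = length xs - 1" by (simp add: face_def)

lemma odd_set: "{j. j \<le> Suc m \<and> odd j} = Suc ` {j. j \<le> m \<and> even j}"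
proof (rule set_eqI, rule iffI)
  fix x assume "x \<in> {j. j \<le> Suc m \<and> odd j}"
  then obtain y where "x = Suc y" "y \<le> m" "even y" by (cases x) auto
  then show "x \<in> Suc ` {j. j \<le> m \<and> even j}" by auto
qed auto

lemma even_set: "{j. j \<le> Suc m \<and> even j} = insert 0 (Suc ` {j. j \<le> m \<and> odd j})"
proof (rule set_eqI, rule iffI)
  fix x assume "x \<in> {j. j \<le> Suc m \<and> even j}"
  then show "x \<in> insert 0 (Suc ` {j. j \<le> m \<and> odd j})" by (cases x) auto
qed auto

lemma main:
  assumes "1 \<le> m" "length xs = Suc m" "sorted_wrt (<) xs" "\<forall>a\<in>set xs. a \<le> k"
  shows "frag_of (src (brk xs)) - (\<Sum>j\<in>{j. j \<le> m \<and> odd j}. frag_of (brk (face j xs))) \<in> LR k (m-1)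
       \<and> frag_of (tgt (brk xs)) - (\<Sum>j\<in>{j. j \<le> m \<and> even j}. frag_of (brk (face j xs))) \<in> LR k (m-1)"
  using assms
proof (induction m arbitrary: xs k)
  case 0 then show ?case by simp
next
  case (Suc m')
  obtain i0 tail where xs: "xs = i0 # tail" using Suc.prems by (cases xs) auto
  have lt: "length tail = Suc m'" using Suc.prems xs by simp
  have gt: "\<forall>a\<in>set tail. i0 < a" and st: "sorted_wrt (<) tail" using Suc.prems xs by auto
  have i0k: "i0 \<le> k" using Suc.prems xs by auto
  show ?case
  proof (cases "m' = 0")
    case True
    then obtain i1 where tl: "tail = [i1]" using lt by (cases tail) auto
    have bx: "brk xs = (Eta ^^ i0) (Xi ((Eta ^^ (i1 - i0)) Ori))" using xs tl by simp
    have s: "src (brk xs) = (Eta ^^ i0) Ori" unfolding src_def bx by (simp add: bd_Etap)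
    have t: "tgt (brk xs) = (Eta ^^ i1) Ori"
    proof -
      have "tgt (brk xs) = (Eta ^^ i0) ((Eta ^^ (i1 - i0)) Ori)" unfolding tgt_def bx by (simp add: bd_Etap bd_id)
      also have "\<dots> = (Eta ^^ (i0 + (i1 - i0))) Ori" by (simp add: funpow_add)
      also have "i0 + (i1 - i0) = i1" using gt tl by simp
      finally show ?thesis .
    qed
    have o: "{j. j \<le> Suc m' \<and> odd j} = {1}" using True by (auto elim: oddE)
    have e: "{j. j \<le> Suc m' \<and> even j} = {0}" using True by auto
    show ?thesis unfolding o e s t using xs tl True by (simp add: face_def LR_zero)
  next
    case False
    then have m1: "1 \<le> m'" by simp
    define ys where "ys = map (\<lambda>a. a - i0) tail"
    have lys: "length ys = Suc m'" using lt by (simp add: ys_def)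
    have sys: "sorted_wrt (<) ys" unfolding ys_def sorted_wrt_map
      using st gt by (induction tail) auto
    have bys: "\<forall>a\<in>set ys. a \<le> k - i0" using Suc.prems xs by (auto simp: ys_def)
    have IH: "frag_of (src (brk ys)) - (\<Sum>j\<in>{j. j \<le> m' \<and> odd j}. frag_of (brk (face j ys))) \<in> LR (k - i0) (m'-1)
       \<and> frag_of (tgt (brk ys)) - (\<Sum>j\<in>{j. j \<le> m' \<and> even j}. frag_of (brk (face j ys))) \<in> LR (k - i0) (m'-1)"
      using Suc.IH[OF m1 lys sys bys] .
    define y where "y = brk ys"
    have dy: "dim y = m'" using lys by (simp add: y_def dim_brk)
    have wy: "wf (k - i0) y" unfolding y_def using bys by (intro wf_brk)
    obtain w r where tw: "tail = w # r" using lt by (cases tail) auto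
    have bx: "brk xs = (Eta ^^ i0) (Xi y)" using xs tw by (simp add: y_def ys_def)
    have dx: "dim (brk xs) = Suc m'" using Suc.prems by (simp add: dim_brk)
    have sx: "src (brk xs) = (Eta ^^ i0) (Xi (tgt y))"
      unfolding src_def dx using dy m1 by (simp add: bx bd_Etap tgt_def)
    have tx: "tgt (brk xs) = (Eta ^^ i0) (chain (FF y) y [0..<m'])"
      unfolding tgt_def dx using dy m1 by (simp add: bx bd_Etap bd_id)
    have fS: "brk (face (Suc j) xs) = (Eta ^^ i0) (Xi (brk (face j ys)))" if "j \<le> m'" for j
    proof -
      have "length (face j tail) = m'" using that lt by (simp add: length_face)
      then obtain v vs where fv: "face j tail = v # vs" using m1 by (cases "face j tail") auto
      have "brk (face (Suc j) xs) = (Eta ^^ i0) (Xi (brk (map (\<lambda>a. a - i0) (face j tail))))"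
        unfolding xs face_Suc_Cons fv by simp
      then show ?thesis by (simp add: ys_def face_map)
    qed
    have f0: "brk (face 0 xs) = (Eta ^^ i0) y"
    proof -
      have "map (\<lambda>x. x + i0) ys = tail" unfolding ys_def using gt by (induction tail) auto
      moreover have "ys \<noteq> []" using lys by auto
      ultimately show ?thesis unfolding xs face_0_Cons y_def using Etap_brk[of ys i0] by simp
    qed
    have So: "(\<Sum>j\<in>{j. j \<le> Suc m' \<and> odd j}. frag_of (brk (face j xs))) =
        Phi i0 (\<Sum>j\<in>{j. j \<le> m' \<and> even j}. frag_of (brk (face j ys)))"
      unfolding odd_set by (simp add: sum.reindex Phi_sum fS)
    have Se: "(\<Sum>j\<in>{j. j \<le> Suc m' \<and> even j}. frag_of (brk (face j xs))) =
        frag_of ((Eta ^^ i0) y) + Phi i0 (\<Sum>j\<in>{j. j \<le> m' \<and> odd j}. frag_of (brk (face j ys)))"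
    proof -
      have "0 \<notin> Suc ` {j. j \<le> m' \<and> odd j}" by auto
      then show ?thesis unfolding even_set using f0 by (simp add: sum.reindex Phi_sum fS)
    qed
    have kk: "k - i0 + i0 = k" using i0k by simp
    have A: "frag_of (src (brk xs)) - (\<Sum>j\<in>{j. j \<le> Suc m' \<and> odd j}. frag_of (brk (face j xs))) \<in> LR k m'"
    proof -
      have "Phi i0 (frag_of (tgt (brk ys)) - (\<Sum>j\<in>{j. j \<le> m' \<and> even j}. frag_of (brk (face j ys)))) \<in> LR (k - i0 + i0) (Suc (m' - 1))"
        using IH by (intro LR_Phi) auto
      then show ?thesis unfolding So sx Phi_diff using kk m1 by (simp add: y_def)
    qed
    have B: "frag_of (tgt (brk xs)) - (\<Sum>j\<in>{j. j \<le> Suc m' \<and> even j}. frag_of (brk (face j xs))) \<in> LR k m'"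
    proof -
      have 1: "Ep i0 (frag_of (chain (FF y) y [0..<m']) - frag_of y - frag_of (FF y (m'-1))) \<in> LR (k - i0 + i0) m'"
        using L_chain[OF wy dy m1] by (rule LR_Ep)
      have 2: "Phi i0 (frag_of (src (brk ys)) - (\<Sum>j\<in>{j. j \<le> m' \<and> odd j}. frag_of (brk (face j ys)))) \<in> LR (k - i0 + i0) (Suc (m' - 1))"
        using IH by (intro LR_Phi) auto
      then have 2: "Phi i0 (frag_of (src (brk ys)) - (\<Sum>j\<in>{j. j \<le> m' \<and> odd j}. frag_of (brk (face j ys)))) \<in> LR (k - i0 + i0) m'"
        using m1 by simp
      have sy: "src y = bd (m' - 1) False y" using dy by (simp add: src_def)
      have "frag_of (tgt (brk xs)) - (\<Sum>j\<in>{j. j \<le> Suc m' \<and> even j}. frag_of (brk (face j xs))) =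
         Ep i0 (frag_of (chain (FF y) y [0..<m']) - frag_of y - frag_of (FF y (m'-1)))
         + Phi i0 (frag_of (src (brk ys)) - (\<Sum>j\<in>{j. j \<le> m' \<and> odd j}. frag_of (brk (face j ys))))"
        unfolding Se tx Ep_diff Phi_diff using sy by (simp add: y_def[symmetric])
      then show ?thesis using LR_add[OF 1 2] kk m1 by simp
    qed
    show ?thesis using A B by simp
  qed
qed

theorem mainTheorem11:
  fixes n :: int and m :: nat and xs :: "nat list"
  assumes "n \<ge> -1" and "m \<ge> 1"
    and "length xs = Suc m" and "sorted_wrt (<) xs" and "\<forall>i\<in>set xs. int i \<le> n"
  shows "lam_eq (nat n) (m - 1) (cls (src (brk xs)))
           (\<Sum>j\<in>{j. j \<le> m \<and> odd j}. cls (brk (face j xs)))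
       \<and> lam_eq (nat n) (m - 1) (cls (tgt (brk xs)))
           (\<Sum>j\<in>{j. j \<le> m \<and> even j}. cls (brk (face j xs)))"
proof -
  have b: "\<forall>a\<in>set xs. a \<le> nat n" using assms(5) by auto
  have "frag_of (src (brk xs)) - (\<Sum>j\<in>{j. j \<le> m \<and> odd j}. frag_of (brk (face j xs))) \<in> LR (nat n) (m-1)
       \<and> frag_of (tgt (brk xs)) - (\<Sum>j\<in>{j. j \<le> m \<and> even j}. frag_of (brk (face j xs))) \<in> LR (nat n) (m-1)"
    using main[OF assms(2,3,4) b] .
  then show ?thesis unfolding lam_eq_def cls_def using LR_sub by blast
qed

end
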